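(* Let $n\ge2$, $m\ge2$ be integers, let $\mathcal{V}=\mathcal{V}_1\otimes\dots\otimes\mathcal{V}_m$ be a tensor product of vector spaces over a field $\mathbb{F}$, let $\{x_a : a\in[n]\}$ be a multiset of product tensors with $x_a=x_{a,1}\otimes\dots\otimes x_{a,m}$, and let $d_j=\dim\operatorname{span}\{x_{a,j}:a\in[n]\}$ for $j\in[m]$. If $\{x_a: a \in [n] \}$ forms a circuit, then $d_j >1$ for at most $n-2$ indices $j \in [m]$.
   Context: A product tensor is a non-zero tensor $z_1\otimes\dots\otimes z_m$, $z_j\in\mathcal{V}_j$. A multiset of non-zero vectors forms a circuit if it is linearly dependent and every proper sub-multiset is linearly independent. *)

theory Defs
  imports Main HOL.Vector_Spaces "HOL-Library.Function_Algebras"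
begin

text \<open>Vectors of a vector space over a field 'f are modelled as coordinate functions
  'i \<Rightarrow> 'f (w.r.t. a basis indexed by 'i); scalar multiplication is pointwise.\<close>

definition fscale :: "'f::field \<Rightarrow> ('i \<Rightarrow> 'f) \<Rightarrow> ('i \<Rightarrow> 'f)" where
  "fscale c v = (\<lambda>i. c * v i)"

lemma vector_space_fscale: "vector_space (fscale :: 'f::field \<Rightarrow> ('i \<Rightarrow> 'f) \<Rightarrow> _)"
  by unfold_locales (auto simp: fscale_def fun_eq_iff algebra_simps)

definition dim_span :: "('i \<Rightarrow> 'f::field) set \<Rightarrow> nat" where
  "dim_span S = vector_space.dim fscale (module.span fscale S)"

text \<open>Product tensor z_0 \<otimes> ... \<otimes> z_(m-1), as a coordinate function on multi-indices
  (the tensor product of the coordinate spaces is realised by products of coordinates).\<close>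
definition prod_tensor :: "nat \<Rightarrow> (nat \<Rightarrow> 'i \<Rightarrow> 'f::field) \<Rightarrow> ((nat \<Rightarrow> 'i) \<Rightarrow> 'f)" where
  "prod_tensor m z = (\<lambda>ii. \<Prod>j<m. z j (ii j))"

definition lin_dep_family :: "nat set \<Rightarrow> (nat \<Rightarrow> 't \<Rightarrow> 'f::field) \<Rightarrow> bool" where
  "lin_dep_family A y \<longleftrightarrow> (\<exists>c. (\<exists>a\<in>A. c a \<noteq> 0) \<and> (\<forall>t. (\<Sum>a\<in>A. c a * y a t) = 0))"

definition is_circuit :: "nat \<Rightarrow> (nat \<Rightarrow> 't \<Rightarrow> 'f::field) \<Rightarrow> bool" where
  "is_circuit n y \<longleftrightarrow> (\<forall>a<n. y a \<noteq> (\<lambda>_. 0)) \<and> lin_dep_family {..<n} y \<and>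
     (\<forall>B. B \<subset> {..<n} \<longrightarrow> \<not> lin_dep_family B y)"

end

theory Submission
  imports Defs
begin

lemma indep_trick:
  fixes P G :: "nat \<Rightarrow> (nat \<Rightarrow> 'i) \<Rightarrow> 'f::field"
  assumes ind: "\<not> lin_dep_family B P"
    and PP: "\<And>b jj ii. b \<in> B \<Longrightarrow> P b (\<lambda>k. if k < t then jj k else ii k) = P b jj"
    and GG: "\<And>b jj ii. b \<in> B \<Longrightarrow> G b (\<lambda>k. if k < t then jj k else ii k) = G b ii"
    and S: "\<And>ii. (\<Sum>b\<in>B. G b ii * P b ii) = 0"
  shows "\<forall>b\<in>B. \<forall>ii. G b ii = 0"
proof (rule ccontr)
  assume "\<not> ?thesis"
  then obtain b0 ii0 where b0: "b0 \<in> B" "G b0 ii0 \<noteq> 0" by blast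
  have "\<forall>jj. (\<Sum>b\<in>B. G b ii0 * P b jj) = 0"
  proof
    fix jj
    have "(\<Sum>b\<in>B. G b ii0 * P b jj) = (\<Sum>b\<in>B. G b (\<lambda>k. if k < t then jj k else ii0 k) * P b (\<lambda>k. if k < t then jj k else ii0 k))"
      by (rule sum.cong) (auto simp: PP GG)
    also have "\<dots> = 0" by (rule S)
    finally show "(\<Sum>b\<in>B. G b ii0 * P b jj) = 0" .
  qed
  then have "lin_dep_family B P" unfolding lin_dep_family_def using b0
    by (intro exI[of _ "\<lambda>b. G b ii0"]) auto
  with ind show False by blast
qed

lemma pt_merge: "prod_tensor t z (\<lambda>k. if k < t then jj k else ii k) = prod_tensor t z jj"
  unfolding prod_tensor_def by (rule prod.cong) auto

lemma pt_Suc: "prod_tensor (Suc t) z ii = prod_tensor t z ii * z t (ii t)"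
  unfolding prod_tensor_def by simp

lemma pt_split: "t \<le> m \<Longrightarrow> prod_tensor m z ii = prod_tensor t z ii * (\<Prod>j\<in>{t..<m}. z j (ii j))"
  unfolding prod_tensor_def
  by (metis prod.atLeastLessThan_concat lessThan_atLeast0 zero_le)

lemma dep_insert:
  fixes y :: "nat \<Rightarrow> 't \<Rightarrow> 'f::field"
  assumes "finite B" "a \<notin> B" "\<not> lin_dep_family B y" "lin_dep_family (insert a B) y"
  shows "\<exists>\<mu>. \<forall>ii. y a ii = (\<Sum>b\<in>B. \<mu> b * y b ii)"
proof -
  from assms(4) obtain c where c: "\<exists>a'\<in>insert a B. c a' \<noteq> 0" "\<forall>ii. (\<Sum>a'\<in>insert a B. c a' * y a' ii) = 0"
    unfolding lin_dep_family_def by blast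
  have S: "\<And>ii. c a * y a ii + (\<Sum>b\<in>B. c b * y b ii) = 0"
    using c(2) assms(1,2) by (simp add: sum.insert)
  have ca: "c a \<noteq> 0"
  proof
    assume "c a = 0"
    then have "\<exists>b\<in>B. c b \<noteq> 0" "\<forall>ii. (\<Sum>b\<in>B. c b * y b ii) = 0" using c(1) S by auto
    then have "lin_dep_family B y" unfolding lin_dep_family_def by blast
    with assms(3) show False by blast
  qed
  show ?thesis
  proof (intro exI allI)
    fix ii
    have "y a ii = - (\<Sum>b\<in>B. c b * y b ii) / c a" using S[of ii] ca
      by (simp add: field_simps add_eq_0_iff)
    also have "\<dots> = (\<Sum>b\<in>B. (- c b / c a) * y b ii)"
      by (simp add: sum_divide_distrib sum_negf)
    finally show "y a ii = (\<Sum>b\<in>B. (- c b / c a) * y b ii)" .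
  qed
qed


lemma weak_step:
  fixes x :: "nat \<Rightarrow> nat \<Rightarrow> 'i \<Rightarrow> 'f::field"
  assumes ind: "\<not> lin_dep_family B (\<lambda>a. prod_tensor t (x a))"
    and nz: "\<forall>b\<in>B. x b t \<noteq> (\<lambda>_. 0)"
  shows "\<not> lin_dep_family B (\<lambda>a. prod_tensor (Suc t) (x a))"
proof
  assume "lin_dep_family B (\<lambda>a. prod_tensor (Suc t) (x a))"
  then obtain c where c: "\<exists>b\<in>B. c b \<noteq> 0" "\<forall>ii. (\<Sum>b\<in>B. c b * prod_tensor (Suc t) (x b) ii) = 0"
    unfolding lin_dep_family_def by blast
  have "\<forall>b\<in>B. \<forall>ii. c b * x b t (ii t) = 0"
  proof (rule indep_trick[where P="\<lambda>a. prod_tensor t (x a)" and t=t, OF ind])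
    fix ii
    show "(\<Sum>b\<in>B. c b * x b t (ii t) * prod_tensor t (x b) ii) = 0"
      using c(2) by (simp add: pt_Suc mult_ac)
  qed (auto simp: pt_merge)
  moreover obtain b0 where "b0 \<in> B" "c b0 \<noteq> 0" using c(1) by blast
  ultimately have "\<forall>i. x b0 t i = 0"
  proof (intro allI)
    fix i
    assume "\<forall>b\<in>B. \<forall>ii. c b * x b t (ii t) = 0" "b0 \<in> B" "c b0 \<noteq> 0"
    then have "\<forall>ii. c b0 * x b0 t (ii t) = 0" by blast
    from this[rule_format, of "\<lambda>_. i"] have "c b0 * x b0 t i = 0" by simp
    with \<open>c b0 \<noteq> 0\<close> show "x b0 t i = 0" by simp
  qed
  with nz \<open>b0 \<in> B\<close> show False by auto
qed

lemma strong_step: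
  fixes x :: "nat \<Rightarrow> nat \<Rightarrow> 'i \<Rightarrow> 'f::field"
  assumes circ: "is_circuit n (\<lambda>a. prod_tensor m (x a))"
    and tm: "t < m" and n0: "0 < n"
    and Bsub: "B \<subseteq> {..<n}"
    and Bind: "\<not> lin_dep_family B (\<lambda>a. prod_tensor t (x a))"
    and sp: "\<forall>a<n. \<exists>\<mu>. (\<forall>ii. prod_tensor t (x a) ii = (\<Sum>b\<in>B. \<mu> b * prod_tensor t (x b) ii))
               \<and> (\<forall>b\<in>B. \<mu> b \<noteq> 0 \<longrightarrow> (\<exists>\<kappa>. \<forall>i. x a t i = \<kappa> * x b t i))"
    and nz: "\<forall>a<n. x a t \<noteq> (\<lambda>_. 0)"
  shows "\<forall>a<n. \<exists>\<kappa>. \<forall>i. x a t i = \<kappa> * x 0 t i"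
proof (rule ccontr)
  assume "\<not> ?thesis"
  then obtain a1 where a1: "a1 < n" "\<not> (\<exists>\<kappa>. \<forall>i. x a1 t i = \<kappa> * x 0 t i)" by blast
  define par where "par = (\<lambda>a b. \<exists>\<kappa>. \<forall>i. x a t i = \<kappa> * x b t i)"
  from sp obtain \<mu> where \<mu>: "\<And>a. a < n \<Longrightarrow> (\<forall>ii. prod_tensor t (x a) ii = (\<Sum>b\<in>B. \<mu> a b * prod_tensor t (x b) ii))
               \<and> (\<forall>b\<in>B. \<mu> a b \<noteq> 0 \<longrightarrow> par a b)"
    unfolding par_def by metis
  define C where "C = {a. a < n \<and> par a 0}"
  have trans: "par a c" if h: "par a b" "par b c" for a b c
  proof -
    obtain k1 k2 where "\<forall>i. x a t i = k1 * x b t i" "\<forall>i. x b t i = k2 * x c t i"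
      using h unfolding par_def by blast
    then have "\<forall>i. x a t i = (k1 * k2) * x c t i" by (simp add: mult_ac)
    then show ?thesis unfolding par_def by blast
  qed
  have sym: "par b a" if h: "par a b" "a < n" for a b
  proof -
    obtain k where k: "\<forall>i. x a t i = k * x b t i" using h unfolding par_def by blast
    have "k \<noteq> 0"
    proof
      assume "k = 0"
      then have "x a t = (\<lambda>_. 0)" using k by auto
      with nz \<open>a < n\<close> show False by auto
    qed
    then have "\<forall>i. x b t i = inverse k * x a t i" using k by auto
    then show ?thesis unfolding par_def by blast
  qed
  have muC: "a \<in> C \<longleftrightarrow> b \<in> C" if "a < n" "b \<in> B" "\<mu> a b \<noteq> 0" for a b
  proof -
    have pab: "par a b" using \<mu>[OF \<open>a < n\<close>] that by blast
    have bn: "b < n" using Bsub that by auto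
    show ?thesis unfolding C_def using trans[OF pab] trans[OF sym[OF pab \<open>a<n\<close>]] bn that(1) by blast
  qed
  from circ obtain c where c: "\<exists>a\<in>{..<n}. c a \<noteq> 0"
     "\<forall>ii. (\<Sum>a\<in>{..<n}. c a * prod_tensor m (x a) ii) = 0"
    and minimal: "\<forall>B'. B' \<subset> {..<n} \<longrightarrow> \<not> lin_dep_family B' (\<lambda>a. prod_tensor m (x a))"
    unfolding is_circuit_def lin_dep_family_def by blast
  define Q where "Q = (\<lambda>a ii. \<Prod>j\<in>{t..<m}. x a j (ii j))"
  have PmQ: "prod_tensor m (x a) ii = (\<Sum>b\<in>B. \<mu> a b * prod_tensor t (x b) ii) * Q a ii" if "a < n" for a ii
    using pt_split[of t m "x a" ii] tm \<mu>[OF that] unfolding Q_def by auto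
  define G where "G = (\<lambda>b ii. \<Sum>a\<in>{..<n}. c a * \<mu> a b * Q a ii)"
  have G0: "\<forall>b\<in>B. \<forall>ii. G b ii = 0"
  proof (rule indep_trick[where P="\<lambda>a. prod_tensor t (x a)" and t=t, OF Bind])
    fix ii
    have "0 = (\<Sum>a\<in>{..<n}. c a * prod_tensor m (x a) ii)" using c(2) by simp
    also have "\<dots> = (\<Sum>a\<in>{..<n}. \<Sum>b\<in>B. c a * \<mu> a b * Q a ii * prod_tensor t (x b) ii)"
      by (rule sum.cong) (auto simp: PmQ sum_distrib_left sum_distrib_right mult_ac)
    also have "\<dots> = (\<Sum>b\<in>B. G b ii * prod_tensor t (x b) ii)"
      unfolding G_def by (subst sum.swap) (simp add: sum_distrib_right)
    finally show "(\<Sum>b\<in>B. G b ii * prod_tensor t (x b) ii) = 0" by simp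
  next
    fix b jj ii
    show "G b (\<lambda>k. if k < t then jj k else ii k) = G b ii"
      unfolding G_def Q_def by (intro sum.cong refl arg_cong2[where f="(*)"] prod.cong) auto
  qed (auto simp: pt_merge)
  have Csub: "C \<subseteq> {..<n}" unfolding C_def by auto
  have H: "(\<Sum>a\<in>C. c a * prod_tensor m (x a) ii) = 0" for ii
  proof -
    have "(\<Sum>a\<in>C. c a * prod_tensor m (x a) ii) = (\<Sum>a\<in>C. \<Sum>b\<in>B. c a * \<mu> a b * Q a ii * prod_tensor t (x b) ii)"
      by (rule sum.cong) (use Csub in \<open>auto simp: PmQ sum_distrib_left sum_distrib_right mult_ac\<close>)
    also have "\<dots> = (\<Sum>b\<in>B. (\<Sum>a\<in>C. c a * \<mu> a b * Q a ii) * prod_tensor t (x b) ii)"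
      by (subst sum.swap) (simp add: sum_distrib_right)
    also have "\<dots> = 0"
    proof (rule sum.neutral, rule ballI)
      fix b assume b: "b \<in> B"
      show "(\<Sum>a\<in>C. c a * \<mu> a b * Q a ii) * prod_tensor t (x b) ii = 0"
      proof (cases "b \<in> C")
        case True
        have "(\<Sum>a\<in>C. c a * \<mu> a b * Q a ii) = (\<Sum>a\<in>{..<n}. c a * \<mu> a b * Q a ii)"
          by (rule sum.mono_neutral_left) (use Csub muC b True in auto)
        also have "\<dots> = 0" using G0 b unfolding G_def by blast
        finally show ?thesis by simp
      next
        case False
        have "(\<Sum>a\<in>C. c a * \<mu> a b * Q a ii) = 0"
          by (rule sum.neutral) (use Csub muC b False in auto)
        then show ?thesis by simp
      qed
    qed
    finally show ?thesis .
  qed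
  have a1C: "a1 \<notin> C" using a1 unfolding C_def par_def by auto
  have zC: "0 \<in> C" using n0 unfolding C_def par_def by (auto intro: exI[of _ 1])
  show False
  proof (cases "\<exists>a\<in>C. c a \<noteq> 0")
    case True
    then have "lin_dep_family C (\<lambda>a. prod_tensor m (x a))"
      unfolding lin_dep_family_def using H by blast
    moreover have "C \<subset> {..<n}" using Csub a1C a1 by auto
    ultimately show False using minimal by blast
  next
    case False
    let ?D = "{..<n} - C"
    have "\<exists>a\<in>?D. c a \<noteq> 0" using False c(1) by auto
    moreover have "(\<Sum>a\<in>?D. c a * prod_tensor m (x a) ii) = 0" for ii
    proof -
      have "(\<Sum>a\<in>{..<n}. c a * prod_tensor m (x a) ii) = (\<Sum>a\<in>?D. c a * prod_tensor m (x a) ii) + (\<Sum>a\<in>C. c a * prod_tensor m (x a) ii)"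
        using Csub by (metis (no_types, lifting) finite_lessThan sum.subset_diff)
      then show ?thesis using c(2) H by simp
    qed
    ultimately have "lin_dep_family ?D (\<lambda>a. prod_tensor m (x a))"
      unfolding lin_dep_family_def by blast
    moreover have "?D \<subset> {..<n}" using zC n0 by auto
    ultimately show False using minimal by blast
  qed
qed


lemma circ_nz:
  fixes x :: "nat \<Rightarrow> nat \<Rightarrow> 'i \<Rightarrow> 'f::field"
  assumes circ: "is_circuit n (\<lambda>a. prod_tensor m (x a))" and "a < n" "j < m"
  shows "x a j \<noteq> (\<lambda>_. 0)"
proof
  assume h: "x a j = (\<lambda>_. 0)"
  have "prod_tensor m (x a) = (\<lambda>_. 0)"
    unfolding prod_tensor_def
  proof
    fix ii show "(\<Prod>j<m. x a j (ii j)) = 0"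
      using h \<open>j < m\<close> by (intro prod_zero) (auto intro!: bexI[of _ j])
  qed
  with circ \<open>a < n\<close> show False unfolding is_circuit_def by blast
qed

lemma main_step:
  fixes x :: "nat \<Rightarrow> nat \<Rightarrow> 'i \<Rightarrow> 'f::field"
  assumes circ: "is_circuit n (\<lambda>a. prod_tensor m (x a))"
    and tm: "t < m" and n0: "0 < n"
    and Bsub: "B \<subseteq> {..<n}"
    and Bind: "\<not> lin_dep_family B (\<lambda>a. prod_tensor t (x a))"
  shows "\<exists>B'\<subseteq>{..<n}. \<not> lin_dep_family B' (\<lambda>a. prod_tensor (Suc t) (x a)) \<and>
           card B + (if (\<exists>a<n. \<not> (\<exists>\<kappa>. \<forall>i. x a t i = \<kappa> * x 0 t i)) then 1 else 0) \<le> card B'"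
proof (cases "\<exists>a<n. \<not> (\<exists>\<kappa>. \<forall>i. x a t i = \<kappa> * x 0 t i)")
  case False
  have "\<not> lin_dep_family B (\<lambda>a. prod_tensor (Suc t) (x a))"
    using weak_step[OF Bind] circ_nz[OF circ _ tm] Bsub by blast
  with Bsub False show ?thesis by auto
next
  case True
  have nz: "\<forall>a<n. x a t \<noteq> (\<lambda>_. 0)" using circ_nz[OF circ _ tm] by blast
  define S where "S = {B'. B' \<subseteq> {..<n} \<and> \<not> lin_dep_family B' (\<lambda>a. prod_tensor t (x a))}"
  have finS: "finite S" unfolding S_def
    by (rule finite_subset[of _ "Pow {..<n}"]) auto
  have BS: "B \<in> S" using Bsub Bind unfolding S_def by auto
  define M where "M = Max (card ` S)"
  have "M \<in> card ` S" unfolding M_def using finS BS by (intro Max_in) auto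
  then obtain Bs where Bs: "Bs \<in> S" "card Bs = M" by auto
  have Mge: "card B' \<le> M" if "B' \<in> S" for B'
    unfolding M_def using finS that by (intro Max_ge) auto
  have Bssub: "Bs \<subseteq> {..<n}" and Bsind: "\<not> lin_dep_family Bs (\<lambda>a. prod_tensor t (x a))"
    using Bs(1) unfolding S_def by auto
  have finBs: "finite Bs" using Bssub finite_subset by blast
  have maxl: "lin_dep_family (insert a Bs) (\<lambda>a. prod_tensor t (x a))" if "a < n" "a \<notin> Bs" for a
  proof (rule ccontr)
    assume "\<not> ?thesis"
    then have "insert a Bs \<in> S" using Bssub that unfolding S_def by auto
    then have "card (insert a Bs) \<le> M" by (rule Mge)
    with finBs that Bs(2) show False by simp
  qed
  have "\<exists>a<n. a \<notin> Bs \<and> \<not> lin_dep_family (insert a Bs) (\<lambda>a. prod_tensor (Suc t) (x a))"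
  proof (rule ccontr)
    assume "\<not> ?thesis"
    then have dep1: "lin_dep_family (insert a Bs) (\<lambda>a. prod_tensor (Suc t) (x a))" if "a < n" "a \<notin> Bs" for a
      using that by blast
    have sp: "\<forall>a<n. \<exists>\<mu>. (\<forall>ii. prod_tensor t (x a) ii = (\<Sum>b\<in>Bs. \<mu> b * prod_tensor t (x b) ii))
               \<and> (\<forall>b\<in>Bs. \<mu> b \<noteq> 0 \<longrightarrow> (\<exists>\<kappa>. \<forall>i. x a t i = \<kappa> * x b t i))"
    proof (intro allI impI)
      fix a assume an: "a < n"
      show "\<exists>\<mu>. (\<forall>ii. prod_tensor t (x a) ii = (\<Sum>b\<in>Bs. \<mu> b * prod_tensor t (x b) ii))
               \<and> (\<forall>b\<in>Bs. \<mu> b \<noteq> 0 \<longrightarrow> (\<exists>\<kappa>. \<forall>i. x a t i = \<kappa> * x b t i))"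
      proof (cases "a \<in> Bs")
        case True
        show ?thesis
        proof (intro exI[of _ "\<lambda>b. if b = a then 1 else 0"] conjI allI ballI impI)
          fix ii show "prod_tensor t (x a) ii = (\<Sum>b\<in>Bs. (if b = a then 1 else 0) * prod_tensor t (x b) ii)"
          proof -
            have "(\<Sum>b\<in>Bs. (if b = a then 1 else 0) * prod_tensor t (x b) ii) = (\<Sum>b\<in>Bs. if a = b then prod_tensor t (x b) ii else 0)"
              by (rule sum.cong) auto
            also have "\<dots> = prod_tensor t (x a) ii" using True finBs by (simp add: sum.delta)
            finally show ?thesis by simp
          qed
        next
          fix b assume "b \<in> Bs" "(if b = a then 1 else (0::'f)) \<noteq> 0"
          then have "b = a" by (auto split: if_splits)
          then show "\<exists>\<kappa>. \<forall>i. x a t i = \<kappa> * x b t i" by (intro exI[of _ 1]) simp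
        qed
      next
        case False
        obtain \<mu> where \<mu>: "\<forall>ii. prod_tensor t (x a) ii = (\<Sum>b\<in>Bs. \<mu> b * prod_tensor t (x b) ii)"
          using dep_insert[OF finBs False Bsind maxl[OF an False]] by blast
        have Bsind1: "\<not> lin_dep_family Bs (\<lambda>a. prod_tensor (Suc t) (x a))"
          using weak_step[OF Bsind] nz Bssub by blast
        obtain lam where lam: "\<forall>ii. prod_tensor (Suc t) (x a) ii = (\<Sum>b\<in>Bs. lam b * prod_tensor (Suc t) (x b) ii)"
          using dep_insert[OF finBs False Bsind1 dep1[OF an False]] by blast
        have G0: "\<forall>b\<in>Bs. \<forall>ii. (\<mu> b * x a t (ii t) - lam b * x b t (ii t)) = 0"
        proof (rule indep_trick[where P="\<lambda>a. prod_tensor t (x a)" and t=t, OF Bsind])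
          fix ii
          have "(\<Sum>b\<in>Bs. (\<mu> b * x a t (ii t) - lam b * x b t (ii t)) * prod_tensor t (x b) ii)
              = (\<Sum>b\<in>Bs. \<mu> b * prod_tensor t (x b) ii) * x a t (ii t) - (\<Sum>b\<in>Bs. lam b * prod_tensor (Suc t) (x b) ii)"
            by (simp add: pt_Suc sum_distrib_right sum_distrib_left sum_subtractf algebra_simps)
          also have "\<dots> = 0" using \<mu> lam by (simp add: pt_Suc)
          finally show "(\<Sum>b\<in>Bs. (\<mu> b * x a t (ii t) - lam b * x b t (ii t)) * prod_tensor t (x b) ii) = 0" .
        qed (auto simp: pt_merge)
        show ?thesis
        proof (intro exI[of _ \<mu>] conjI ballI impI)
          show "\<forall>ii. prod_tensor t (x a) ii = (\<Sum>b\<in>Bs. \<mu> b * prod_tensor t (x b) ii)" by (rule \<mu>)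
        next
          fix b assume b: "b \<in> Bs" "\<mu> b \<noteq> 0"
          have "\<forall>i. x a t i = (lam b / \<mu> b) * x b t i"
          proof
            fix i
            have "\<forall>ii. \<mu> b * x a t (ii t) - lam b * x b t (ii t) = 0" using G0 b by blast
            from this[rule_format, of "\<lambda>_. i"] have "\<mu> b * x a t i = lam b * x b t i" by simp
            with b(2) show "x a t i = (lam b / \<mu> b) * x b t i" by (simp add: field_simps)
          qed
          then show "\<exists>\<kappa>. \<forall>i. x a t i = \<kappa> * x b t i" by blast
        qed
      qed
    qed
    have "\<forall>a<n. \<exists>\<kappa>. \<forall>i. x a t i = \<kappa> * x 0 t i"
      by (rule strong_step[OF circ tm n0 Bssub Bsind sp nz])
    with True show False by blast
  qed
  then obtain a where a: "a < n" "a \<notin> Bs" "\<not> lin_dep_family (insert a Bs) (\<lambda>a. prod_tensor (Suc t) (x a))"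
    by blast
  have "card B \<le> card Bs" using Mge[OF BS] Bs(2) by simp
  then have "card B + 1 \<le> card (insert a Bs)" using finBs a(2) by simp
  then show ?thesis using True a Bssub by (intro exI[of _ "insert a Bs"]) auto
qed


lemma chain:
  fixes x :: "nat \<Rightarrow> nat \<Rightarrow> 'i \<Rightarrow> 'f::field"
  assumes circ: "is_circuit n (\<lambda>a. prod_tensor m (x a))" and n0: "0 < n"
  shows "t \<le> m \<Longrightarrow> \<exists>B\<subseteq>{..<n}. \<not> lin_dep_family B (\<lambda>a. prod_tensor t (x a)) \<and>
           1 + card {j. j < t \<and> (\<exists>a<n. \<not> (\<exists>\<kappa>. \<forall>i. x a j i = \<kappa> * x 0 j i))} \<le> card B"
proof (induction t)
  case 0
  have "\<not> lin_dep_family {0} (\<lambda>a. prod_tensor 0 (x a))"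
    unfolding lin_dep_family_def prod_tensor_def by simp
  then show ?case using n0 by (intro exI[of _ "{0}"]) auto
next
  case (Suc t)
  then obtain B where B: "B \<subseteq> {..<n}" "\<not> lin_dep_family B (\<lambda>a. prod_tensor t (x a))"
    "1 + card {j. j < t \<and> (\<exists>a<n. \<not> (\<exists>\<kappa>. \<forall>i. x a j i = \<kappa> * x 0 j i))} \<le> card B" by auto
  from main_step[OF circ _ n0 B(1,2)] Suc.prems obtain B' where
    B': "B' \<subseteq> {..<n}" "\<not> lin_dep_family B' (\<lambda>a. prod_tensor (Suc t) (x a))"
      "card B + (if (\<exists>a<n. \<not> (\<exists>\<kappa>. \<forall>i. x a t i = \<kappa> * x 0 t i)) then 1 else 0) \<le> card B'"
    by auto
  let ?nt = "\<lambda>j. \<exists>a<n. \<not> (\<exists>\<kappa>. \<forall>i. x a j i = \<kappa> * x 0 j i)"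
  have "card {j. j < Suc t \<and> ?nt j} \<le> card {j. j < t \<and> ?nt j} + (if ?nt t then 1 else 0)"
  proof (cases "?nt t")
    case True
    have "{j. j < Suc t \<and> ?nt j} = insert t {j. j < t \<and> ?nt j}" using True by (auto simp: less_Suc_eq)
    then show ?thesis using True by (simp add: card_insert_if)
  next
    case False
    have "{j. j < Suc t \<and> ?nt j} = {j. j < t \<and> ?nt j}" using False by (auto simp: less_Suc_eq)
    then show ?thesis by simp
  qed
  then show ?case using B(3) B' by (intro exI[of _ B']) auto
qed

theorem corollary7p8:
  fixes n m :: nat
    and x :: "nat \<Rightarrow> nat \<Rightarrow> 'i \<Rightarrow> 'f::field"
  assumes "n \<ge> 2" and "m \<ge> 2"
    and "is_circuit n (\<lambda>a. prod_tensor m (x a))"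
  shows "card {j. j < m \<and> dim_span ((\<lambda>a. x a j) ` {..<n}) > 1} \<le> n - 2"
proof -
  interpret V: vector_space "fscale :: 'f \<Rightarrow> ('i \<Rightarrow> 'f) \<Rightarrow> _" by (rule vector_space_fscale)
  have n0: "0 < n" using assms(1) by simp
  let ?nt = "\<lambda>j. \<exists>a<n. \<not> (\<exists>\<kappa>. \<forall>i. x a j i = \<kappa> * x 0 j i)"
  obtain B where B: "B \<subseteq> {..<n}" "\<not> lin_dep_family B (\<lambda>a. prod_tensor m (x a))"
    "1 + card {j. j < m \<and> ?nt j} \<le> card B"
    using chain[OF assms(3) n0, of m] by auto
  have "lin_dep_family {..<n} (\<lambda>a. prod_tensor m (x a))" using assms(3) unfolding is_circuit_def by blast
  then have "B \<subset> {..<n}" using B(1,2) by auto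
  then have "card B < n" using psubset_card_mono[of "{..<n}" B] by simp
  have sub: "{j. j < m \<and> dim_span ((\<lambda>a. x a j) ` {..<n}) > 1} \<subseteq> {j. j < m \<and> ?nt j}"
  proof safe
    fix j assume jm: "j < m" and d: "1 < dim_span ((\<lambda>a. x a j) ` {..<n})"
    show "?nt j"
    proof (rule ccontr)
      assume "\<not> ?nt j"
      then have all: "\<forall>a<n. \<exists>\<kappa>. \<forall>i. x a j i = \<kappa> * x 0 j i" by blast
      have "(\<lambda>a. x a j) ` {..<n} \<subseteq> V.span {x 0 j}"
      proof
        fix v assume "v \<in> (\<lambda>a. x a j) ` {..<n}"
        then obtain a where a: "a < n" "v = x a j" by auto
        then obtain k where "\<forall>i. x a j i = k * x 0 j i" using all by blast
        then have "v = fscale k (x 0 j)" using a unfolding fscale_def by auto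
        then show "v \<in> V.span {x 0 j}" by (simp add: V.span_base V.span_scale)
      qed
      then have "V.dim ((\<lambda>a. x a j) ` {..<n}) \<le> card {x 0 j}" by (intro V.dim_le_card) auto
      then have "dim_span ((\<lambda>a. x a j) ` {..<n}) \<le> 1" unfolding dim_span_def by simp
      with d show False by simp
    qed
  qed
  have "card {j. j < m \<and> dim_span ((\<lambda>a. x a j) ` {..<n}) > 1} \<le> card {j. j < m \<and> ?nt j}"
    by (rule card_mono[OF _ sub]) auto
  then show ?thesis using B(3) \<open>card B < n\<close> by linarith
qed

end
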